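(* Consider a finite MDP, a target policy $\pi$ and a behaviour policy $\mu$, and assume that for each state $x\in\mathcal{X}$ there is a unique greedy action $a^*(x)=\arg\max_{b\in\mathcal{A}}Q^\pi(x,b)$. Then there exists $\alpha\in(0,1)$ such that, letting $\widetilde{Q}_\alpha$ be the fixed point of the $\alpha$-Retrace operator $\mathcal{R}^\alpha$, the greedy policy with respect to $\widetilde{Q}_\alpha$ coincides with the greedy policy with respect to $Q^\pi$ (i.e. $\arg\max_b \widetilde{Q}_\alpha(x,b)=\{a^*(x)\}$ for all $x$), and the contraction rate of $\mathcal{R}^\alpha$ is no greater than that of $\mathcal{R}^1$ (standard Retrace). Further, if $\pi$ and $\mu$ are $(x,a)$-distinguishable under $\mu$ for all $(x,a)\in\mathcal{X}\times\mathcal{A}$, then the contraction rate of $\mathcal{R}^\alpha$ is strictly lower than that of $\mathcal{R}^1$.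
   Context: MDP: finite state space $\mathcal{X}$, finite action space $\mathcal{A}$, discount $\gamma\in[0,1)$, transition kernel $P$, bounded rewards with mean $r(x,a)$; $Q^\nu$ denotes the action-value function of a policy $\nu$. $\mathbb{E}_\mu[\cdot\mid X_0=x,A_0=a]$ denotes expectation over the trajectory with $X_{t+1}\sim P(\cdot|X_t,A_t)$, $A_{t+1}\sim\mu(\cdot|X_{t+1})$; empty products equal $1$. For target $\pi'$ and behaviour $\mu$, the Retrace operator is $$(\mathcal{R}_{\pi',\mu}Q)(x,a)=Q(x,a)+\mathbb{E}_\mu\Big[\sum_{t\ge0}\gamma^t\Big(\prod_{s=1}^t\min\big(1,\tfrac{\pi'(A_s|X_s)}{\mu(A_s|X_s)}\big)\Big)\Big(r(X_t,A_t)+\gamma\sum_{b}\pi'(b|X_{t+1})Q(X_{t+1},b)-Q(X_t,A_t)\Big)\,\Big|\,X_0=x,A_0=a\Big].$$ The $\alpha$-Retrace operator is $\mathcal{R}^\alpha=\mathcal{R}_{\alpha\pi+(1-\alpha)\mu,\mu}$. The contraction rate of an operator $T$ is $\sup_{Q\neq Q'}\|TQ-TQ'\|_\infty/\|Q-Q'\|_\infty$. The greedy policy with respect to $Q$ selects at each $x$ an action in $\arg\max_b Q(x,b)$. Policies $\pi,\mu$ are $(x,a)$-distinguishable under $\mu$ if some state $x'$ visited with positive probability at some time $t\ge0$ by the $\mu$-trajectory started from $(x,a)$ satisfies $\pi(\cdot|x')\neq\mu(\cdot|x')$. *)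

theory Defs
  imports Complex_Main
begin

text \<open>Finite MDP: states of type 'x::finite, actions of type 'a::finite.
  A transition kernel P x a y = probability of moving to y after action a in x.
  A policy nu x b = probability of choosing b in x.\<close>

definition is_kernel :: "('x::finite \<Rightarrow> 'a::finite \<Rightarrow> 'x \<Rightarrow> real) \<Rightarrow> bool" where
  "is_kernel P \<longleftrightarrow> (\<forall>x a y. 0 \<le> P x a y) \<and> (\<forall>x a. (\<Sum>y\<in>UNIV. P x a y) = 1)"

definition is_policy :: "('x::finite \<Rightarrow> 'a::finite \<Rightarrow> real) \<Rightarrow> bool" where
  "is_policy \<nu> \<longleftrightarrow> (\<forall>x b. 0 \<le> \<nu> x b) \<and> (\<forall>x. (\<Sum>b\<in>UNIV. \<nu> x b) = 1)"

text \<open>occ P nu x a t y b = Pr(X_t = y, A_t = b | X_0 = x, A_0 = a) for the trajectory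
  X_{t+1} ~ P(.|X_t,A_t), A_{t+1} ~ nu(.|X_{t+1}).\<close>

fun occ :: "('x::finite \<Rightarrow> 'a::finite \<Rightarrow> 'x \<Rightarrow> real) \<Rightarrow> ('x \<Rightarrow> 'a \<Rightarrow> real)
             \<Rightarrow> 'x \<Rightarrow> 'a \<Rightarrow> nat \<Rightarrow> 'x \<Rightarrow> 'a \<Rightarrow> real" where
  "occ P \<nu> x a 0 y b = (if y = x \<and> b = a then 1 else 0)"
| "occ P \<nu> x a (Suc t) y' b' =
     (\<Sum>y\<in>UNIV. \<Sum>b\<in>UNIV. occ P \<nu> x a t y b * P y b y' * \<nu> y' b')"

definition Qfun :: "('x::finite \<Rightarrow> 'a::finite \<Rightarrow> 'x \<Rightarrow> real) \<Rightarrow> real \<Rightarrow> ('x \<Rightarrow> 'a \<Rightarrow> real)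
                    \<Rightarrow> ('x \<Rightarrow> 'a \<Rightarrow> real) \<Rightarrow> 'x \<Rightarrow> 'a \<Rightarrow> real" where
  "Qfun P \<gamma> r \<nu> = (\<lambda>x a. \<Sum>t. \<gamma> ^ t * (\<Sum>y\<in>UNIV. \<Sum>b\<in>UNIV. occ P \<nu> x a t y b * r y b))"

definition trace_c :: "('x \<Rightarrow> 'a \<Rightarrow> real) \<Rightarrow> ('x \<Rightarrow> 'a \<Rightarrow> real) \<Rightarrow> 'x \<Rightarrow> 'a \<Rightarrow> real" where
  "trace_c \<pi>' \<mu> y b = min 1 (\<pi>' y b / \<mu> y b)"

text \<open>trw P pi' mu x a t y b =
  E_mu[(prod_{s=1}^t c(A_s|X_s)) * 1{X_t = y, A_t = b} | X_0 = x, A_0 = a].\<close>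

fun trw :: "('x::finite \<Rightarrow> 'a::finite \<Rightarrow> 'x \<Rightarrow> real) \<Rightarrow> ('x \<Rightarrow> 'a \<Rightarrow> real) \<Rightarrow> ('x \<Rightarrow> 'a \<Rightarrow> real)
             \<Rightarrow> 'x \<Rightarrow> 'a \<Rightarrow> nat \<Rightarrow> 'x \<Rightarrow> 'a \<Rightarrow> real" where
  "trw P \<pi>' \<mu> x a 0 y b = (if y = x \<and> b = a then 1 else 0)"
| "trw P \<pi>' \<mu> x a (Suc t) y' b' =
     (\<Sum>y\<in>UNIV. \<Sum>b\<in>UNIV. trw P \<pi>' \<mu> x a t y b * P y b y' * \<mu> y' b' * trace_c \<pi>' \<mu> y' b')"

text \<open>The Retrace operator R_{pi',mu}, with the expectation of the series written as the
  series of expectations over the finite state-action space.\<close>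

definition retrace :: "('x::finite \<Rightarrow> 'a::finite \<Rightarrow> 'x \<Rightarrow> real) \<Rightarrow> real \<Rightarrow> ('x \<Rightarrow> 'a \<Rightarrow> real)
      \<Rightarrow> ('x \<Rightarrow> 'a \<Rightarrow> real) \<Rightarrow> ('x \<Rightarrow> 'a \<Rightarrow> real)
      \<Rightarrow> ('x \<Rightarrow> 'a \<Rightarrow> real) \<Rightarrow> 'x \<Rightarrow> 'a \<Rightarrow> real" where
  "retrace P \<gamma> r \<pi>' \<mu> Q = (\<lambda>x a. Q x a +
     (\<Sum>t. \<gamma> ^ t * (\<Sum>y\<in>UNIV. \<Sum>b\<in>UNIV. trw P \<pi>' \<mu> x a t y b *
        (r y b + \<gamma> * (\<Sum>z\<in>UNIV. P y b z * (\<Sum>c\<in>UNIV. \<pi>' z c * Q z c)) - Q y b))))"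

definition alpha_retrace :: "('x::finite \<Rightarrow> 'a::finite \<Rightarrow> 'x \<Rightarrow> real) \<Rightarrow> real \<Rightarrow> ('x \<Rightarrow> 'a \<Rightarrow> real)
      \<Rightarrow> ('x \<Rightarrow> 'a \<Rightarrow> real) \<Rightarrow> ('x \<Rightarrow> 'a \<Rightarrow> real) \<Rightarrow> real
      \<Rightarrow> ('x \<Rightarrow> 'a \<Rightarrow> real) \<Rightarrow> 'x \<Rightarrow> 'a \<Rightarrow> real" where
  "alpha_retrace P \<gamma> r \<pi> \<mu> \<alpha> = retrace P \<gamma> r (\<lambda>x b. \<alpha> * \<pi> x b + (1 - \<alpha>) * \<mu> x b) \<mu>"

definition supnorm :: "('x::finite \<Rightarrow> 'a::finite \<Rightarrow> real) \<Rightarrow> real" where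
  "supnorm Q = Max {\<bar>Q x a\<bar> | x a. True}"

definition contraction_rate ::
    "(('x::finite \<Rightarrow> 'a::finite \<Rightarrow> real) \<Rightarrow> ('x \<Rightarrow> 'a \<Rightarrow> real)) \<Rightarrow> real" where
  "contraction_rate T = Sup {supnorm (\<lambda>x a. T Q x a - T Q' x a) / supnorm (\<lambda>x a. Q x a - Q' x a)
                             | Q Q'. Q \<noteq> Q'}"

definition fixed_point :: "(('x \<Rightarrow> 'a \<Rightarrow> real) \<Rightarrow> ('x \<Rightarrow> 'a \<Rightarrow> real)) \<Rightarrow> 'x \<Rightarrow> 'a \<Rightarrow> real" where
  "fixed_point T = (THE Q. T Q = Q)"

definition greedy :: "('x \<Rightarrow> 'a \<Rightarrow> real) \<Rightarrow> 'x \<Rightarrow> 'a set" where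
  "greedy Q x = {b. \<forall>c. Q x c \<le> Q x b}"

definition distinguishable :: "('x::finite \<Rightarrow> 'a::finite \<Rightarrow> 'x \<Rightarrow> real) \<Rightarrow> ('x \<Rightarrow> 'a \<Rightarrow> real)
      \<Rightarrow> ('x \<Rightarrow> 'a \<Rightarrow> real) \<Rightarrow> 'x \<Rightarrow> 'a \<Rightarrow> bool" where
  "distinguishable P \<pi> \<mu> x a \<longleftrightarrow>
     (\<exists>t x'. (\<Sum>b\<in>UNIV. occ P \<mu> x a t x' b) > 0 \<and> \<pi> x' \<noteq> \<mu> x')"

end

theory Submission
  imports Defs
begin

fun mp :: "('s::finite \<Rightarrow> 's \<Rightarrow> real) \<Rightarrow> 's \<Rightarrow> nat \<Rightarrow> 's \<Rightarrow> real" where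
  "mp M s 0 u = (if u = s then 1 else 0)"
| "mp M s (Suc t) u = (\<Sum>v\<in>UNIV. mp M s t v * M v u)"

lemma mp_back: "mp M s (Suc t) u = (\<Sum>v\<in>UNIV. M s v * mp M v t u)"
proof (induction t arbitrary: u)
  case 0
  have "(\<Sum>v\<in>UNIV. (if v = s then 1 else 0) * M v u) = (\<Sum>v\<in>UNIV. if v = s then M s u else 0)"
    by (rule sum.cong) auto
  moreover have "(\<Sum>v\<in>UNIV. M s v * (if u = v then 1 else 0)) = (\<Sum>v\<in>UNIV. if v = u then M s u else 0)"
    by (rule sum.cong) auto
  ultimately show ?case by simp
next
  case (Suc t)
  have "mp M s (Suc (Suc t)) u = (\<Sum>w\<in>UNIV. (\<Sum>v\<in>UNIV. M s v * mp M v t w) * M w u)"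
    using Suc by simp
  also have "\<dots> = (\<Sum>v\<in>UNIV. M s v * (\<Sum>w\<in>UNIV. mp M v t w * M w u))"
    by (simp add: sum_distrib_left sum_distrib_right mult.assoc, rule sum.swap)
  finally show ?case by simp
qed

lemma mp_nonneg: "(\<And>u v. 0 \<le> M u v) \<Longrightarrow> 0 \<le> mp M s t u"
  by (induction t arbitrary: u) (auto intro!: sum_nonneg)

lemma mp_rowsum_le:
  assumes "\<And>u v. 0 \<le> M u v" "\<And>u. (\<Sum>v\<in>UNIV. M u v) \<le> 1"
  shows "(\<Sum>u\<in>UNIV. mp M s t u) \<le> 1"
proof (induction t)
  case 0
  then show ?case by simp
next
  case (Suc t)
  have "(\<Sum>u\<in>UNIV. mp M s (Suc t) u) = (\<Sum>v\<in>UNIV. mp M s t v * (\<Sum>u\<in>UNIV. M v u))"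
    by (simp add: sum_distrib_left, rule sum.swap)
  also have "\<dots> \<le> (\<Sum>v\<in>UNIV. mp M s t v)"
    by (rule sum_mono) (metis assms mp_nonneg mult_left_le)
  finally show ?case using Suc by simp
qed

lemma mp_rowsum_eq:
  assumes "\<And>u. (\<Sum>v\<in>UNIV. M u v) = 1"
  shows "(\<Sum>u\<in>UNIV. mp M s t u) = 1"
proof (induction t)
  case 0
  then show ?case by simp
next
  case (Suc t)
  have "(\<Sum>u\<in>UNIV. mp M s (Suc t) u) = (\<Sum>v\<in>UNIV. mp M s t v * (\<Sum>u\<in>UNIV. M v u))"
    by (simp add: sum_distrib_left, rule sum.swap)
  then show ?case using Suc assms by simp
qed

lemma mp_mono:
  assumes "\<And>u v. 0 \<le> M1 u v" "\<And>u v. M1 u v \<le> M2 u v"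
  shows "mp M1 s t u \<le> mp M2 s t u"
proof (induction t arbitrary: u)
  case 0
  then show ?case by simp
next
  case (Suc t)
  have M2: "\<And>u v. 0 \<le> M2 u v" using order_trans[OF assms(1) assms(2)] by blast
  show ?case
    apply simp
    apply (rule sum_mono)
    apply (rule mult_mono)
    using Suc assms mp_nonneg[of M1] mp_nonneg[of M2, OF M2] by auto
qed

lemma mp_scale: "mp (\<lambda>u v. c * M u v) s t u = c ^ t * mp M s t u"
  by (induction t arbitrary: u) (auto simp: sum_distrib_left mult_ac)

lemma fin_bound: "\<exists>C. \<forall>u::'s::finite. \<bar>(g::'s \<Rightarrow> real) u\<bar> \<le> C"
  by (rule exI[of _ "\<Sum>u\<in>UNIV. \<bar>g u\<bar>"]) (auto intro: member_le_sum)

lemma wsum_bound: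
  fixes W g :: "'s::finite \<Rightarrow> real"
  assumes "\<And>u. 0 \<le> W u" "(\<Sum>u\<in>UNIV. W u) \<le> 1" "\<And>u. \<bar>g u\<bar> \<le> C"
  shows "\<bar>\<Sum>u\<in>UNIV. W u * g u\<bar> \<le> C"
proof -
  have C: "0 \<le> C" using assms(3) abs_ge_zero order_trans by blast
  have "\<bar>\<Sum>u\<in>UNIV. W u * g u\<bar> \<le> (\<Sum>u\<in>UNIV. \<bar>W u * g u\<bar>)" by (rule sum_abs)
  also have "\<dots> \<le> (\<Sum>u\<in>UNIV. W u * C)"
    by (rule sum_mono) (simp add: abs_mult assms(1) assms(3) mult_left_mono)
  also have "\<dots> = (\<Sum>u\<in>UNIV. W u) * C" by (simp add: sum_distrib_right)
  also have "\<dots> \<le> C" using mult_right_mono[OF assms(2) C] by simp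
  finally show ?thesis .
qed

lemma geo_summable:
  fixes f :: "nat \<Rightarrow> real"
  assumes "\<And>t. \<bar>f t\<bar> \<le> C" "0 \<le> \<gamma>" "\<gamma> < 1"
  shows "summable (\<lambda>t. \<gamma> ^ t * f t)"
proof (rule summable_comparison_test[where g="\<lambda>t. C * \<gamma> ^ t"])
  have "\<And>n. \<bar>f n\<bar> * \<gamma> ^ n \<le> C * \<gamma> ^ n" using assms by (simp add: mult_right_mono)
  then show "\<exists>N. \<forall>n\<ge>N. norm (\<gamma> ^ n * f n) \<le> C * \<gamma> ^ n"
    using assms by (auto simp: abs_mult mult.commute)
  show "summable (\<lambda>t. C * \<gamma> ^ t)"
    using assms by (intro summable_mult summable_geometric) auto
qed

definition ret :: "('s::finite \<Rightarrow> 's \<Rightarrow> real) \<Rightarrow> ('s \<Rightarrow> 's \<Rightarrow> real) \<Rightarrow> real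
   \<Rightarrow> ('s \<Rightarrow> real) \<Rightarrow> ('s \<Rightarrow> real) \<Rightarrow> 's \<Rightarrow> real" where
  "ret A B \<gamma> \<rho> Q s = Q s + (\<Sum>t. \<gamma> ^ t * (\<Sum>u\<in>UNIV. mp B s t u *
      (\<rho> u + \<gamma> * (\<Sum>v\<in>UNIV. A u v * Q v) - Q u)))"

lemma ret_diff:
  fixes A B :: "'s::finite \<Rightarrow> 's \<Rightarrow> real"
  assumes B0: "\<And>u v. 0 \<le> B u v" and BA: "\<And>u v. B u v \<le> A u v"
    and A1: "\<And>u. (\<Sum>v\<in>UNIV. A u v) = 1"
    and g0: "0 \<le> \<gamma>" and g1: "\<gamma> < 1"
  shows "ret A B \<gamma> \<rho> Q s - ret A B \<gamma> \<rho> Q' s =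
    (\<Sum>t. \<gamma> ^ Suc t * (\<Sum>u\<in>UNIV. mp B s t u * (\<Sum>v\<in>UNIV. (A u v - B u v) * (Q v - Q' v))))"
proof -
  define W where "W t u = mp B s t u" for t u
  define D where "D v = Q v - Q' v" for v
  define h where "h t = (\<Sum>u\<in>UNIV. W t u * D u)" for t
  define e where "e t = (\<Sum>u\<in>UNIV. W t u * (\<Sum>v\<in>UNIV. (A u v - B u v) * D v))" for t
  define X where "X R t = (\<Sum>u\<in>UNIV. W t u * (\<rho> u + \<gamma> * (\<Sum>v\<in>UNIV. A u v * R v) - R u))" for R t
  have A0: "\<And>u v. 0 \<le> A u v" using B0 BA order_trans by blast
  have Brow: "\<And>u. (\<Sum>v\<in>UNIV. B u v) \<le> 1" using A1 BA by (metis sum_mono)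
  have W0: "\<And>t u. 0 \<le> W t u" unfolding W_def using mp_nonneg B0 by blast
  have W1: "\<And>t. (\<Sum>u\<in>UNIV. W t u) \<le> 1" unfolding W_def using mp_rowsum_le B0 Brow by blast
  have bnd: "\<And>g. \<exists>C. \<forall>t. \<bar>\<Sum>u\<in>UNIV. W t u * g u\<bar> \<le> C"
  proof -
    fix g :: "'s \<Rightarrow> real"
    obtain C where "\<forall>u. \<bar>g u\<bar> \<le> C" using fin_bound by blast
    then show "\<exists>C. \<forall>t. \<bar>\<Sum>u\<in>UNIV. W t u * g u\<bar> \<le> C" using wsum_bound W0 W1 by blast
  qed
  have summ: "summable (\<lambda>t. \<gamma> ^ t * (\<Sum>u\<in>UNIV. W t u * g u))" for g
  proof -
    obtain C where "\<forall>t. \<bar>\<Sum>u\<in>UNIV. W t u * g u\<bar> \<le> C" using bnd by blast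
    then show ?thesis using geo_summable[of "\<lambda>t. \<Sum>u\<in>UNIV. W t u * g u" C \<gamma>] g0 g1 by auto
  qed
  have sX: "\<And>R. summable (\<lambda>t. \<gamma> ^ t * X R t)" unfolding X_def by (rule summ)
  have se: "summable (\<lambda>t. \<gamma> ^ Suc t * e t)"
    using summable_mult[OF summ[of "\<lambda>u. (\<Sum>v\<in>UNIV. (A u v - B u v) * D v)"], of \<gamma>]
    by (simp add: e_def mult_ac)
  have hS: "h (Suc t) = (\<Sum>u\<in>UNIV. W t u * (\<Sum>v\<in>UNIV. B u v * D v))" for t
    unfolding h_def W_def
    by (simp add: sum_distrib_left sum_distrib_right mult_ac, rule sum.swap)
  have termeq: "\<gamma> ^ t * X Q t - \<gamma> ^ t * X Q' t
      = (\<gamma> ^ Suc t * h (Suc t) - \<gamma> ^ t * h t) + \<gamma> ^ Suc t * e t" for t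
  proof -
    have inner: "(\<Sum>v\<in>UNIV. A u v * Q v) - (\<Sum>v\<in>UNIV. A u v * Q' v)
       = (\<Sum>v\<in>UNIV. B u v * D v) + (\<Sum>v\<in>UNIV. (A u v - B u v) * D v)" for u
      by (simp add: sum_subtractf[symmetric] sum.distrib[symmetric] D_def algebra_simps)
    have "X Q t - X Q' t = (\<Sum>u\<in>UNIV. W t u * (\<gamma> * ((\<Sum>v\<in>UNIV. A u v * Q v) - (\<Sum>v\<in>UNIV. A u v * Q' v)) - D u))"
      unfolding X_def D_def
      by (subst sum_subtractf[symmetric], rule sum.cong, simp, simp add: algebra_simps)
    also have "\<dots> = (\<Sum>u\<in>UNIV. W t u * (\<gamma> * (\<Sum>v\<in>UNIV. B u v * D v)
        + \<gamma> * (\<Sum>v\<in>UNIV. (A u v - B u v) * D v) - D u))"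
      unfolding inner by (simp add: algebra_simps)
    also have "\<dots> = \<gamma> * h (Suc t) + \<gamma> * e t - h t"
      unfolding hS unfolding e_def h_def
      by (simp add: algebra_simps sum.distrib sum_subtractf sum_distrib_left)
    finally have "\<gamma> ^ t * (X Q t - X Q' t) = \<gamma> ^ t * (\<gamma> * h (Suc t) + \<gamma> * e t - h t)" by simp
    then show ?thesis by (simp add: algebra_simps)
  qed
  have lim: "(\<lambda>t. \<gamma> ^ t * h t) \<longlonglongrightarrow> 0"
    unfolding h_def by (rule summable_LIMSEQ_zero[OF summ])
  have tel: "(\<lambda>t. \<gamma> ^ Suc t * h (Suc t) - \<gamma> ^ t * h t) sums (0 - h 0)"
    using telescope_sums[OF lim] by simp
  have h0: "h 0 = D s"
  proof -
    have "h 0 = (\<Sum>u\<in>UNIV. if u = s then D s else 0)"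
      unfolding h_def W_def by (rule sum.cong) auto
    then show ?thesis by simp
  qed
  have "ret A B \<gamma> \<rho> Q s - ret A B \<gamma> \<rho> Q' s = D s + ((\<Sum>t. \<gamma> ^ t * X Q t) - (\<Sum>t. \<gamma> ^ t * X Q' t))"
    unfolding ret_def X_def W_def D_def by simp
  also have "(\<Sum>t. \<gamma> ^ t * X Q t) - (\<Sum>t. \<gamma> ^ t * X Q' t) = (\<Sum>t. \<gamma> ^ t * X Q t - \<gamma> ^ t * X Q' t)"
    by (rule suminf_diff[OF sX sX])
  also have "\<dots> = (0 - h 0) + (\<Sum>t. \<gamma> ^ Suc t * e t)"
    unfolding termeq using sums_unique[OF sums_add[OF tel summable_sums[OF se]]] by simp
  finally show ?thesis using h0 unfolding e_def W_def D_def by simp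
qed

lemma W_summable:
  fixes B :: "'s::finite \<Rightarrow> 's \<Rightarrow> real"
  assumes B0: "\<And>u v. 0 \<le> B u v" and Brow: "\<And>u. (\<Sum>v\<in>UNIV. B u v) \<le> 1"
    and g0: "0 \<le> \<gamma>" and g1: "\<gamma> < 1"
  shows "summable (\<lambda>t. \<gamma> ^ t * (\<Sum>u\<in>UNIV. mp B s t u * g u))"
proof -
  obtain C where "\<forall>u. \<bar>g u\<bar> \<le> C" using fin_bound by blast
  then have "\<forall>t. \<bar>\<Sum>u\<in>UNIV. mp B s t u * g u\<bar> \<le> C"
    using wsum_bound mp_nonneg[of B, OF B0] mp_rowsum_le[of B, OF B0 Brow] by blast
  then show ?thesis using geo_summable[of "\<lambda>t. \<Sum>u\<in>UNIV. mp B s t u * g u" C \<gamma>] g0 g1 by auto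
qed

lemma W_summable_Suc:
  fixes B :: "'s::finite \<Rightarrow> 's \<Rightarrow> real"
  assumes B0: "\<And>u v. 0 \<le> B u v" and Brow: "\<And>u. (\<Sum>v\<in>UNIV. B u v) \<le> 1"
    and g0: "0 \<le> \<gamma>" and g1: "\<gamma> < 1"
  shows "summable (\<lambda>t. \<gamma> ^ Suc t * (\<Sum>u\<in>UNIV. mp B s t u * g u))"
  using summable_mult[OF W_summable[OF assms, where s=s and g=g], of \<gamma>] by (simp add: mult_ac)

definition kk :: "('s::finite \<Rightarrow> 's \<Rightarrow> real) \<Rightarrow> ('s \<Rightarrow> 's \<Rightarrow> real) \<Rightarrow> real \<Rightarrow> 's \<Rightarrow> real" where
  "kk A B \<gamma> s = (\<Sum>t. \<gamma> ^ Suc t * (\<Sum>u\<in>UNIV. mp B s t u * (\<Sum>v\<in>UNIV. (A u v - B u v))))"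

lemma ret_bound:
  fixes A B :: "'s::finite \<Rightarrow> 's \<Rightarrow> real"
  assumes B0: "\<And>u v. 0 \<le> B u v" and BA: "\<And>u v. B u v \<le> A u v"
    and A1: "\<And>u. (\<Sum>v\<in>UNIV. A u v) = 1"
    and g0: "0 \<le> \<gamma>" and g1: "\<gamma> < 1"
    and d: "\<And>v. \<bar>Q v - Q' v\<bar> \<le> d"
  shows "\<bar>ret A B \<gamma> \<rho> Q s - ret A B \<gamma> \<rho> Q' s\<bar> \<le> kk A B \<gamma> s * d"
proof -
  have Brow: "\<And>u. (\<Sum>v\<in>UNIV. B u v) \<le> 1" using A1 BA by (metis sum_mono)
  define f where "f t = \<gamma> ^ Suc t * (\<Sum>u\<in>UNIV. mp B s t u * (\<Sum>v\<in>UNIV. (A u v - B u v) * (Q v - Q' v)))" for t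
  define g where "g t = \<gamma> ^ Suc t * (\<Sum>u\<in>UNIV. mp B s t u * (\<Sum>v\<in>UNIV. (A u v - B u v)))" for t
  have sf: "summable f" unfolding f_def by (rule W_summable_Suc[OF B0 Brow g0 g1])
  have sg: "summable g" unfolding g_def by (rule W_summable_Suc[OF B0 Brow g0 g1])
  have inner: "\<bar>\<Sum>v\<in>UNIV. (A u v - B u v) * (Q v - Q' v)\<bar> \<le> (\<Sum>v\<in>UNIV. (A u v - B u v)) * d" for u
  proof -
    have "\<bar>\<Sum>v\<in>UNIV. (A u v - B u v) * (Q v - Q' v)\<bar> \<le> (\<Sum>v\<in>UNIV. \<bar>(A u v - B u v) * (Q v - Q' v)\<bar>)"
      by (rule sum_abs)
    also have "\<dots> \<le> (\<Sum>v\<in>UNIV. (A u v - B u v) * d)"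
      by (rule sum_mono) (simp add: abs_mult BA d mult_left_mono)
    finally show ?thesis by (simp add: sum_distrib_right)
  qed
  have fg: "\<bar>f t\<bar> \<le> g t * d" for t
  proof -
    have "\<bar>\<Sum>u\<in>UNIV. mp B s t u * (\<Sum>v\<in>UNIV. (A u v - B u v) * (Q v - Q' v))\<bar>
        \<le> (\<Sum>u\<in>UNIV. \<bar>mp B s t u * (\<Sum>v\<in>UNIV. (A u v - B u v) * (Q v - Q' v))\<bar>)" by (rule sum_abs)
    also have "\<dots> \<le> (\<Sum>u\<in>UNIV. mp B s t u * ((\<Sum>v\<in>UNIV. (A u v - B u v)) * d))"
      by (rule sum_mono) (simp add: abs_mult mp_nonneg[OF B0] inner mult_left_mono)
    also have "\<dots> = (\<Sum>u\<in>UNIV. mp B s t u * (\<Sum>v\<in>UNIV. (A u v - B u v))) * d"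
      by (simp add: sum_distrib_right sum_distrib_left mult_ac)
    finally have "\<gamma> ^ Suc t * \<bar>\<Sum>u\<in>UNIV. mp B s t u * (\<Sum>v\<in>UNIV. (A u v - B u v) * (Q v - Q' v))\<bar>
       \<le> \<gamma> ^ Suc t * ((\<Sum>u\<in>UNIV. mp B s t u * (\<Sum>v\<in>UNIV. (A u v - B u v))) * d)"
      using g0 by (intro mult_left_mono) auto
    then show ?thesis unfolding f_def g_def using g0 by (simp add: abs_mult mult_ac)
  qed
  have "suminf f \<le> suminf (\<lambda>t. g t * d)"
    using fg by (intro suminf_le sf summable_mult2 sg) (simp add: abs_le_iff)
  moreover have "- suminf f \<le> suminf (\<lambda>t. g t * d)"
    using fg by (subst suminf_minus[OF sf, symmetric], intro suminf_le summable_minus sf summable_mult2 sg)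
      (simp add: abs_le_iff)
  ultimately have "\<bar>suminf f\<bar> \<le> suminf g * d" using suminf_mult2[OF sg, of d] by simp
  then show ?thesis
    using ret_diff[OF B0 BA A1 g0 g1] unfolding f_def g_def kk_def by simp
qed

lemma ret_const:
  fixes A B :: "'s::finite \<Rightarrow> 's \<Rightarrow> real"
  assumes B0: "\<And>u v. 0 \<le> B u v" and BA: "\<And>u v. B u v \<le> A u v"
    and A1: "\<And>u. (\<Sum>v\<in>UNIV. A u v) = 1"
    and g0: "0 \<le> \<gamma>" and g1: "\<gamma> < 1"
  shows "ret A B \<gamma> \<rho> (\<lambda>_. 1) s - ret A B \<gamma> \<rho> (\<lambda>_. 0) s = kk A B \<gamma> s"
  using ret_diff[OF B0 BA A1 g0 g1] unfolding kk_def by simp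

definition wS :: "('s::finite \<Rightarrow> 's \<Rightarrow> real) \<Rightarrow> real \<Rightarrow> 's \<Rightarrow> real" where
  "wS B \<gamma> s = (\<Sum>t. \<gamma> ^ t * (\<Sum>u\<in>UNIV. mp B s t u))"

lemma kk_formula:
  fixes A B :: "'s::finite \<Rightarrow> 's \<Rightarrow> real"
  assumes B0: "\<And>u v. 0 \<le> B u v" and BA: "\<And>u v. B u v \<le> A u v"
    and A1: "\<And>u. (\<Sum>v\<in>UNIV. A u v) = 1"
    and g0: "0 \<le> \<gamma>" and g1: "\<gamma> < 1"
  shows "kk A B \<gamma> s = 1 - (1 - \<gamma>) * wS B \<gamma> s" "1 \<le> wS B \<gamma> s"
proof -
  have Brow: "\<And>u. (\<Sum>v\<in>UNIV. B u v) \<le> 1" using A1 BA by (metis sum_mono)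
  define w where "w t = (\<Sum>u\<in>UNIV. mp B s t u)" for t
  have sw: "summable (\<lambda>t. \<gamma> ^ t * w t)"
    using W_summable[OF B0 Brow g0 g1, where s=s and g="\<lambda>_. 1"] unfolding w_def by simp
  have wSuc: "w (Suc t) = (\<Sum>u\<in>UNIV. mp B s t u * (\<Sum>v\<in>UNIV. B u v))" for t
    unfolding w_def by (simp add: sum_distrib_left, rule sum.swap)
  have tt: "(\<Sum>u\<in>UNIV. mp B s t u * (\<Sum>v\<in>UNIV. (A u v - B u v))) = w t - w (Suc t)" for t
    unfolding wSuc by (simp add: sum_subtractf A1 w_def right_diff_distrib sum.distrib)
  have w0: "w 0 = 1" unfolding w_def by simp
  have s1: "summable (\<lambda>t. \<gamma> ^ Suc t * w t)" using summable_mult[OF sw, of \<gamma>] by (simp add: mult_ac)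
  have s2: "summable (\<lambda>t. \<gamma> ^ Suc t * w (Suc t))" using summable_Suc_iff[of "\<lambda>t. \<gamma> ^ t * w t"] sw by simp
  have "kk A B \<gamma> s = (\<Sum>t. \<gamma> ^ Suc t * w t - \<gamma> ^ Suc t * w (Suc t))"
    unfolding kk_def tt by (simp add: right_diff_distrib)
  also have "\<dots> = (\<Sum>t. \<gamma> ^ Suc t * w t) - (\<Sum>t. \<gamma> ^ Suc t * w (Suc t))"
    by (rule suminf_diff[OF s1 s2, symmetric])
  also have "(\<Sum>t. \<gamma> ^ Suc t * w t) = \<gamma> * wS B \<gamma> s"
    unfolding wS_def w_def[symmetric] using suminf_mult[OF sw, of \<gamma>] by (simp add: mult_ac)
  also have "(\<Sum>t. \<gamma> ^ Suc t * w (Suc t)) = wS B \<gamma> s - 1"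
    unfolding wS_def w_def[symmetric] using suminf_split_head[OF sw] w0 by simp
  finally show "kk A B \<gamma> s = 1 - (1 - \<gamma>) * wS B \<gamma> s" by (simp add: algebra_simps)
  have "(\<Sum>t\<in>{0}. \<gamma> ^ t * w t) \<le> (\<Sum>t. \<gamma> ^ t * w t)"
    by (rule sum_le_suminf[OF sw]) (auto simp: w_def g0 intro!: sum_nonneg mp_nonneg B0 mult_nonneg_nonneg)
  then show "1 \<le> wS B \<gamma> s" unfolding wS_def w_def[symmetric] using w0 by simp
qed

definition Qp :: "('s::finite \<Rightarrow> 's \<Rightarrow> real) \<Rightarrow> ('s \<Rightarrow> real) \<Rightarrow> real \<Rightarrow> 's \<Rightarrow> real" where
  "Qp M \<rho> \<gamma> s = (\<Sum>t. \<gamma> ^ t * (\<Sum>u\<in>UNIV. mp M s t u * \<rho> u))"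

lemma Qp_bellman:
  fixes M :: "'s::finite \<Rightarrow> 's \<Rightarrow> real"
  assumes M0: "\<And>u v. 0 \<le> M u v" and Mrow: "\<And>u. (\<Sum>v\<in>UNIV. M u v) \<le> 1"
    and g0: "0 \<le> \<gamma>" and g1: "\<gamma> < 1"
  shows "Qp M \<rho> \<gamma> s = \<rho> s + \<gamma> * (\<Sum>v\<in>UNIV. M s v * Qp M \<rho> \<gamma> v)"
proof -
  define G where "G t s = (\<Sum>u\<in>UNIV. mp M s t u * \<rho> u)" for t s
  have sG: "summable (\<lambda>t. \<gamma> ^ t * G t s)" for s
    unfolding G_def by (rule W_summable[OF M0 Mrow g0 g1])
  have G0: "G 0 s = \<rho> s"
  proof -
    have "G 0 s = (\<Sum>u\<in>UNIV. if u = s then \<rho> s else 0)"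
      unfolding G_def by (rule sum.cong) auto
    then show ?thesis by simp
  qed
  have GS: "G (Suc t) s = (\<Sum>v\<in>UNIV. M s v * G t v)" for t
    unfolding G_def mp_back by (simp add: sum_distrib_left sum_distrib_right mult_ac, rule sum.swap)
  have "(\<Sum>t. \<gamma> ^ Suc t * G (Suc t) s) = Qp M \<rho> \<gamma> s - \<rho> s"
    using suminf_split_head[OF sG[of s]] G0 unfolding Qp_def G_def by simp
  moreover have "(\<Sum>t. \<gamma> ^ Suc t * G (Suc t) s) = (\<Sum>t. \<Sum>v\<in>UNIV. (\<gamma> * M s v) * (\<gamma> ^ t * G t v))"
    unfolding GS by (simp add: sum_distrib_left mult_ac)
  moreover have "\<dots> = (\<Sum>v\<in>UNIV. \<Sum>t. (\<gamma> * M s v) * (\<gamma> ^ t * G t v))"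
    by (rule suminf_sum) (intro summable_mult sG)
  moreover have "\<dots> = (\<Sum>v\<in>UNIV. (\<gamma> * M s v) * Qp M \<rho> \<gamma> v)"
    unfolding Qp_def G_def[symmetric] by (intro sum.cong refl suminf_mult sG)
  ultimately show ?thesis by (simp add: sum_distrib_left mult_ac)
qed

lemma ret_fixed:
  fixes A B :: "'s::finite \<Rightarrow> 's \<Rightarrow> real"
  assumes "\<And>u. Q u = \<rho> u + \<gamma> * (\<Sum>v\<in>UNIV. A u v * Q v)"
  shows "ret A B \<gamma> \<rho> Q = Q"
proof
  fix s
  have "\<rho> u + \<gamma> * (\<Sum>v\<in>UNIV. A u v * Q v) - Q u = 0" for u using assms[of u] by linarith
  then show "ret A B \<gamma> \<rho> Q s = Q s" unfolding ret_def by simp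
qed

lemma supnorm_set: "{\<bar>Q x a\<bar> | x a. True} = range (\<lambda>p. \<bar>Q (fst p) (snd p)\<bar>)"
  by (auto simp: image_iff; metis fst_conv snd_conv)

lemma supnorm_ge: "\<bar>(Q::'x::finite \<Rightarrow> 'a::finite \<Rightarrow> real) x a\<bar> \<le> supnorm Q"
  unfolding supnorm_def supnorm_set
  using rangeI[of "\<lambda>p. \<bar>Q (fst p) (snd p)\<bar>" "(x,a)"] by (intro Max_ge) auto

lemma supnorm_le: "(\<And>x a. \<bar>(Q::'x::finite \<Rightarrow> 'a::finite \<Rightarrow> real) x a\<bar> \<le> c) \<Longrightarrow> supnorm Q \<le> c"
  unfolding supnorm_def supnorm_set by (rule Max.boundedI) auto

lemma supnorm_attained: "\<exists>x a. supnorm (Q::'x::finite \<Rightarrow> 'a::finite \<Rightarrow> real) = \<bar>Q x a\<bar>"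
proof -
  have "supnorm Q \<in> range (\<lambda>p. \<bar>Q (fst p) (snd p)\<bar>)"
    unfolding supnorm_def supnorm_set by (rule Max_in) auto
  then show ?thesis by auto
qed

lemma supnorm_nonneg: "0 \<le> supnorm (Q::'x::finite \<Rightarrow> 'a::finite \<Rightarrow> real)"
  using supnorm_ge[of Q] abs_ge_zero order_trans by blast

lemma supnorm_pos: "(Q::'x::finite \<Rightarrow> 'a::finite \<Rightarrow> real) \<noteq> (\<lambda>x a. 0) \<Longrightarrow> 0 < supnorm Q"
proof -
  assume "Q \<noteq> (\<lambda>x a. 0)"
  then obtain x a where "Q x a \<noteq> 0" by blast
  then show ?thesis using supnorm_ge[of Q x a] by simp
qed

lemma rate_eq:
  fixes T :: "('x::finite \<Rightarrow> 'a::finite \<Rightarrow> real) \<Rightarrow> ('x \<Rightarrow> 'a \<Rightarrow> real)"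
  assumes bnd: "\<And>Q Q' x a. \<bar>T Q x a - T Q' x a\<bar> \<le> k x a * supnorm (\<lambda>x a. Q x a - Q' x a)"
    and one: "\<And>x a. T (\<lambda>_ _. 1) x a - T (\<lambda>_ _. 0) x a = k x a"
    and k0: "\<And>x a. 0 \<le> k x a"
  shows "contraction_rate T = supnorm k"
  unfolding contraction_rate_def
proof (rule cSup_eq_maximum)
  have s1: "supnorm (\<lambda>(x::'x) (a::'a). (1::real) - 0) = 1"
  proof -
    obtain x a where "supnorm (\<lambda>(x::'x) (a::'a). (1::real) - 0) = \<bar>(\<lambda>(x::'x) (a::'a). (1::real) - 0) x a\<bar>"
      using supnorm_attained by blast
    then show ?thesis by simp
  qed
  have s2: "(\<lambda>x a. T (\<lambda>_ _. 1) x a - T (\<lambda>_ _. 0) x a) = k" using one by blast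
  have s3: "(\<lambda>(_::'x) (_::'a). 1::real) \<noteq> (\<lambda>_ _. 0)" by (metis zero_neq_one)
  have "supnorm k = supnorm (\<lambda>x a. T (\<lambda>_ _. 1) x a - T (\<lambda>_ _. 0) x a)
      / supnorm (\<lambda>x a. (\<lambda>(_::'x) (_::'a). 1::real) x a - (\<lambda>_ _. 0) x a)"
    using s1 s2 by simp
  then show "supnorm k \<in> {supnorm (\<lambda>x a. T Q x a - T Q' x a) / supnorm (\<lambda>x a. Q x a - Q' x a) |Q Q'. Q \<noteq> Q'}"
    using s3 by (intro CollectI exI conjI[rotated]) (assumption, simp)
next
  fix z assume "z \<in> {supnorm (\<lambda>x a. T Q x a - T Q' x a) / supnorm (\<lambda>x a. Q x a - Q' x a) |Q Q'. Q \<noteq> Q'}"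
  then obtain Q Q' where QQ: "Q \<noteq> Q'" and z: "z = supnorm (\<lambda>x a. T Q x a - T Q' x a) / supnorm (\<lambda>x a. Q x a - Q' x a)"
    by blast
  have "(\<lambda>x a. Q x a - Q' x a) \<noteq> (\<lambda>x a. 0)" using QQ by (auto simp: fun_eq_iff)
  then have pos: "0 < supnorm (\<lambda>x a. Q x a - Q' x a)" by (rule supnorm_pos)
  have "\<bar>T Q x a - T Q' x a\<bar> \<le> supnorm k * supnorm (\<lambda>x a. Q x a - Q' x a)" for x a
  proof -
    have "k x a * supnorm (\<lambda>x a. Q x a - Q' x a) \<le> supnorm k * supnorm (\<lambda>x a. Q x a - Q' x a)"
      using supnorm_ge[of k x a] k0[of x a] pos by (intro mult_right_mono) auto
    then show ?thesis using bnd[of Q x a Q'] by linarith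
  qed
  then have "supnorm (\<lambda>x a. T Q x a - T Q' x a) \<le> supnorm k * supnorm (\<lambda>x a. Q x a - Q' x a)"
    by (intro supnorm_le) simp
  then show "z \<le> supnorm k" unfolding z using pos_divide_le_eq[OF pos] by (simp only:)
qed

definition unc :: "('x \<Rightarrow> 'a \<Rightarrow> real) \<Rightarrow> 'x \<times> 'a \<Rightarrow> real" where
  "unc Q p = Q (fst p) (snd p)"

definition Mk :: "('x::finite \<Rightarrow> 'a::finite \<Rightarrow> 'x \<Rightarrow> real) \<Rightarrow> ('x \<Rightarrow> 'a \<Rightarrow> real)
    \<Rightarrow> 'x \<times> 'a \<Rightarrow> 'x \<times> 'a \<Rightarrow> real" where
  "Mk P \<nu> p q = P (fst p) (snd p) (fst q) * \<nu> (fst q) (snd q)"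

lemma sum2: "(\<Sum>y\<in>UNIV. \<Sum>b\<in>UNIV. f y b) = (\<Sum>p\<in>(UNIV::('x::finite \<times> 'a::finite) set). f (fst p) (snd p))"
  unfolding sum.cartesian_product UNIV_Times_UNIV by (simp add: case_prod_beta)

lemma occ_mp: "occ P \<nu> x a t y b = mp (Mk P \<nu>) (x,a) t (y,b)"
  by (induction t arbitrary: y b) (simp_all add: sum2 Mk_def mult.assoc)

lemma trw_mp: "trw P \<pi>' \<mu> x a t y b = mp (Mk P (\<lambda>y b. \<mu> y b * trace_c \<pi>' \<mu> y b)) (x,a) t (y,b)"
  by (induction t arbitrary: y b) (simp_all add: sum2 Mk_def mult.assoc)

lemma inner_eq: "(\<Sum>z\<in>UNIV. P y b z * (\<Sum>c\<in>UNIV. \<nu> z c * Q z c)) = (\<Sum>q\<in>UNIV. Mk P \<nu> (y,b) q * unc Q q)"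
  by (simp add: sum_distrib_left sum2 Mk_def unc_def mult.assoc)

lemma retrace_ret: "retrace P \<gamma> r \<pi>' \<mu> Q x a =
   ret (Mk P \<pi>') (Mk P (\<lambda>y b. \<mu> y b * trace_c \<pi>' \<mu> y b)) \<gamma> (unc r) (unc Q) (x,a)"
  unfolding retrace_def ret_def inner_eq trw_mp by (simp add: sum2 unc_def)

lemma Qfun_Qp: "Qfun P \<gamma> r \<nu> x a = Qp (Mk P \<nu>) (unc r) \<gamma> (x,a)"
  unfolding Qfun_def Qp_def occ_mp by (simp add: sum2 unc_def)

lemma Mk_nonneg: "is_kernel P \<Longrightarrow> (\<And>y b. 0 \<le> \<nu> y b) \<Longrightarrow> 0 \<le> Mk P \<nu> p q"
  unfolding Mk_def is_kernel_def by simp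

lemma Mk_row: "is_kernel P \<Longrightarrow> (\<And>y. (\<Sum>b\<in>UNIV. \<nu> y b) = 1) \<Longrightarrow> (\<Sum>q\<in>UNIV. Mk P \<nu> p q) = 1"
  unfolding Mk_def is_kernel_def
  using sum2[of "\<lambda>y' b'. P (fst p) (snd p) y' * \<nu> y' b'", symmetric]
  by (simp add: sum_distrib_left[symmetric])

lemma Mk_mono: "is_kernel P \<Longrightarrow> (\<And>y b. \<nu>1 y b \<le> \<nu>2 y b) \<Longrightarrow> Mk P \<nu>1 p q \<le> Mk P \<nu>2 p q"
  unfolding Mk_def is_kernel_def by (simp add: mult_left_mono)

lemma trace_min:
  assumes "0 \<le> \<mu> y b" "0 \<le> \<pi>' y b"
  shows "\<mu> y b * trace_c \<pi>' \<mu> y b = min (\<mu> y b) (\<pi>' y b)"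
proof (cases "\<mu> y b = 0")
  case True then show ?thesis using assms by (simp add: trace_c_def)
next
  case False
  then have "0 < \<mu> y b" using assms by simp
  then show ?thesis unfolding trace_c_def
    by (simp add: min_def field_simps mult_le_cancel_left1 divide_le_eq)
qed

lemma rt_hyps:
  assumes K: "is_kernel P" and p1: "is_policy \<pi>'" and p2: "is_policy \<mu>"
  shows "\<And>u v. 0 \<le> Mk P (\<lambda>y b. \<mu> y b * trace_c \<pi>' \<mu> y b) u v"
    "\<And>u v. Mk P (\<lambda>y b. \<mu> y b * trace_c \<pi>' \<mu> y b) u v \<le> Mk P \<pi>' u v"
    "\<And>u. (\<Sum>v\<in>UNIV. Mk P \<pi>' u v) = 1"
proof -
  have tm: "\<mu> y b * trace_c \<pi>' \<mu> y b = min (\<mu> y b) (\<pi>' y b)" for y b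
    using p1 p2 unfolding is_policy_def by (intro trace_min) auto
  show "\<And>u v. 0 \<le> Mk P (\<lambda>y b. \<mu> y b * trace_c \<pi>' \<mu> y b) u v"
    using p1 p2 unfolding is_policy_def tm by (intro Mk_nonneg K) auto
  show "\<And>u v. Mk P (\<lambda>y b. \<mu> y b * trace_c \<pi>' \<mu> y b) u v \<le> Mk P \<pi>' u v"
    unfolding tm by (intro Mk_mono K) auto
  show "\<And>u. (\<Sum>v\<in>UNIV. Mk P \<pi>' u v) = 1"
    using p1 unfolding is_policy_def by (intro Mk_row K) auto
qed

lemma kk_nonneg:
  fixes A B :: "'s::finite \<Rightarrow> 's \<Rightarrow> real"
  assumes B0: "\<And>u v. 0 \<le> B u v" and BA: "\<And>u v. B u v \<le> A u v"
    and A1: "\<And>u. (\<Sum>v\<in>UNIV. A u v) = 1"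
    and g0: "0 \<le> \<gamma>" and g1: "\<gamma> < 1"
  shows "0 \<le> kk A B \<gamma> s"
proof -
  have Brow: "\<And>u. (\<Sum>v\<in>UNIV. B u v) \<le> 1" using A1 BA by (metis sum_mono)
  show ?thesis unfolding kk_def
    apply (rule suminf_nonneg[OF W_summable_Suc[OF B0 Brow g0 g1]])
    using g0 BA by (auto intro!: mult_nonneg_nonneg sum_nonneg mp_nonneg B0)
qed

lemma retrace_main:
  assumes K: "is_kernel P" and p1: "is_policy \<pi>'" and p2: "is_policy \<mu>"
    and g0: "0 \<le> \<gamma>" and g1: "\<gamma> < 1"
  shows "contraction_rate (retrace P \<gamma> r \<pi>' \<mu>)
           = supnorm (\<lambda>x a. kk (Mk P \<pi>') (Mk P (\<lambda>y b. \<mu> y b * trace_c \<pi>' \<mu> y b)) \<gamma> (x,a))"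
    and "fixed_point (retrace P \<gamma> r \<pi>' \<mu>) = Qfun P \<gamma> r \<pi>'"
proof -
  define A where "A = Mk P \<pi>'"
  define B where "B = Mk P (\<lambda>y b. \<mu> y b * trace_c \<pi>' \<mu> y b)"
  define k where "k x a = kk A B \<gamma> (x,a)" for x a
  note H = rt_hyps[OF K p1 p2, folded A_def B_def]
  have T: "retrace P \<gamma> r \<pi>' \<mu> Q x a = ret A B \<gamma> (unc r) (unc Q) (x,a)" for Q x a
    unfolding A_def B_def by (rule retrace_ret)
  have k0: "0 \<le> k x a" for x a unfolding k_def by (rule kk_nonneg[where A=A and B=B, OF H g0 g1])
  have kg: "k x a \<le> \<gamma>" for x a
  proof -
    have "(1 - \<gamma>) * 1 \<le> (1 - \<gamma>) * wS B \<gamma> (x,a)"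
      using kk_formula(2)[where A=A and B=B and s="(x,a)", OF H g0 g1] g1 by (intro mult_left_mono) auto
    then show ?thesis using kk_formula(1)[where A=A and B=B and s="(x,a)", OF H g0 g1] unfolding k_def by (simp add: algebra_simps)
  qed
  have bnd: "\<bar>retrace P \<gamma> r \<pi>' \<mu> Q x a - retrace P \<gamma> r \<pi>' \<mu> Q' x a\<bar> \<le> k x a * supnorm (\<lambda>x a. Q x a - Q' x a)"
    for Q Q' x a
    unfolding T k_def
    by (rule ret_bound[where A=A and B=B, OF H g0 g1]) (simp add: unc_def supnorm_ge[of "\<lambda>x a. Q x a - Q' x a", simplified])
  have one: "retrace P \<gamma> r \<pi>' \<mu> (\<lambda>_ _. 1) x a - retrace P \<gamma> r \<pi>' \<mu> (\<lambda>_ _. 0) x a = k x a" for x a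
  proof -
    show ?thesis unfolding T k_def unc_def using ret_const[where A=A and B=B, OF H g0 g1] by simp
  qed
  have rate: "contraction_rate (retrace P \<gamma> r \<pi>' \<mu>) = supnorm k"
    by (rule rate_eq[OF bnd one k0])
  then show "contraction_rate (retrace P \<gamma> r \<pi>' \<mu>)
           = supnorm (\<lambda>x a. kk (Mk P \<pi>') (Mk P (\<lambda>y b. \<mu> y b * trace_c \<pi>' \<mu> y b)) \<gamma> (x,a))"
    unfolding k_def A_def B_def by simp
  have sk: "supnorm k \<le> \<gamma>" using k0 kg by (intro supnorm_le) simp
  have A0: "\<And>u v. 0 \<le> A u v" using H order_trans by blast
  have Arow: "\<And>u. (\<Sum>v\<in>UNIV. A u v) \<le> 1" using H by simp
  have uQ: "unc (Qfun P \<gamma> r \<pi>') = Qp A (unc r) \<gamma>"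
    unfolding A_def by (auto simp: unc_def Qfun_Qp)
  have fixQ: "retrace P \<gamma> r \<pi>' \<mu> (Qfun P \<gamma> r \<pi>') = Qfun P \<gamma> r \<pi>'"
  proof (intro ext)
    fix x a
    have "ret A B \<gamma> (unc r) (Qp A (unc r) \<gamma>) = Qp A (unc r) \<gamma>"
      by (rule ret_fixed) (rule Qp_bellman[OF A0 Arow g0 g1])
    then show "retrace P \<gamma> r \<pi>' \<mu> (Qfun P \<gamma> r \<pi>') x a = Qfun P \<gamma> r \<pi>' x a"
      unfolding T uQ by (simp add: Qfun_Qp A_def)
  qed
  have uniq: "Q = Qfun P \<gamma> r \<pi>'" if "retrace P \<gamma> r \<pi>' \<mu> Q = Q" for Q
  proof -
    define Q' where "Q' = Qfun P \<gamma> r \<pi>'"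
    have "\<bar>Q x a - Q' x a\<bar> \<le> \<gamma> * supnorm (\<lambda>x a. Q x a - Q' x a)" for x a
    proof -
      have "\<bar>Q x a - Q' x a\<bar> \<le> k x a * supnorm (\<lambda>x a. Q x a - Q' x a)"
        using bnd[of Q x a Q'] that fixQ unfolding Q'_def by simp
      also have "\<dots> \<le> \<gamma> * supnorm (\<lambda>x a. Q x a - Q' x a)"
        using kg supnorm_nonneg by (intro mult_right_mono) auto
      finally show ?thesis .
    qed
    then have "supnorm (\<lambda>x a. Q x a - Q' x a) \<le> \<gamma> * supnorm (\<lambda>x a. Q x a - Q' x a)"
      by (intro supnorm_le) simp
    then have "supnorm (\<lambda>x a. Q x a - Q' x a) \<le> 0"
    proof -
      assume a: "supnorm (\<lambda>x a. Q x a - Q' x a) \<le> \<gamma> * supnorm (\<lambda>x a. Q x a - Q' x a)"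
      have "(1 - \<gamma>) * supnorm (\<lambda>x a. Q x a - Q' x a) \<le> 0" using a by (simp add: algebra_simps)
      then show ?thesis using g1 by (simp add: mult_le_0_iff)
    qed
    then have "(\<lambda>x a. Q x a - Q' x a) = (\<lambda>x a. 0)" using supnorm_pos by fastforce
    then show ?thesis unfolding Q'_def by (auto simp: fun_eq_iff)
  qed
  show "fixed_point (retrace P \<gamma> r \<pi>' \<mu>) = Qfun P \<gamma> r \<pi>'"
    unfolding fixed_point_def using fixQ uniq by blast
qed

lemma sum_pos_ex: "0 < (\<Sum>i\<in>A. f i) \<Longrightarrow> \<exists>i\<in>A. 0 < (f i::real)"
  by (metis not_le sum_nonpos)

lemma pos_ex_kernel: "is_kernel P \<Longrightarrow> \<exists>y. 0 < P x a y"
  unfolding is_kernel_def by (metis sum_pos_ex zero_less_one)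

lemma pos_ex_policy: "is_policy \<mu> \<Longrightarrow> \<exists>b. 0 < \<mu> y b"
  unfolding is_policy_def by (metis sum_pos_ex zero_less_one)

lemma policy_diff_ex:
  assumes "is_policy \<pi>" "is_policy \<mu>" "\<pi> y \<noteq> \<mu> y"
  shows "\<exists>b. \<pi> y b < \<mu> y b"
proof (rule ccontr)
  assume "\<not> ?thesis"
  then have le: "\<And>b. 0 \<le> \<pi> y b - \<mu> y b" by (simp add: not_less)
  have "(\<Sum>b\<in>UNIV. \<pi> y b - \<mu> y b) = 0" using assms(1,2) unfolding is_policy_def by (simp add: sum_subtractf)
  then have "\<forall>b\<in>UNIV. \<pi> y b - \<mu> y b = 0" using sum_nonneg_eq_0_iff[of UNIV "\<lambda>b. \<pi> y b - \<mu> y b"] le by simp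
  then have "\<pi> y = \<mu> y" by auto
  then show False using assms(3) by simp
qed

lemma occ_nonneg: "is_kernel P \<Longrightarrow> is_policy \<mu> \<Longrightarrow> 0 \<le> occ P \<mu> x a t y b"
  unfolding occ_mp by (rule mp_nonneg, rule Mk_nonneg) (auto simp: is_policy_def)

lemma path_exists:
  assumes K: "is_kernel P" and pm: "is_policy \<mu>"
    and D: "\<forall>x a. distinguishable P \<pi> \<mu> x a"
  shows "\<exists>t y b x'. 0 < occ P \<mu> x a t y b \<and> 0 < P y b x' \<and> \<pi> x' \<noteq> \<mu> x'"
proof -
  obtain y1 where y1: "0 < P x a y1" using pos_ex_kernel[OF K] by blast
  obtain b1 where b1: "0 < \<mu> y1 b1" using pos_ex_policy[OF pm] by blast
  obtain t1 x'' where d: "0 < (\<Sum>b\<in>UNIV. occ P \<mu> y1 b1 t1 x'' b)" and nd: "\<pi> x'' \<noteq> \<mu> x''"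
    using D unfolding distinguishable_def by blast
  obtain b'' where b'': "0 < occ P \<mu> y1 b1 t1 x'' b''" using sum_pos_ex[OF d] by blast
  have M0: "\<And>u v. 0 \<le> Mk P \<mu> u v" using pm K by (intro Mk_nonneg) (auto simp: is_policy_def)
  have "Mk P \<mu> (x,a) (y1,b1) * mp (Mk P \<mu>) (y1,b1) t1 (x'',b'')
      \<le> (\<Sum>v\<in>UNIV. Mk P \<mu> (x,a) v * mp (Mk P \<mu>) v t1 (x'',b''))"
    by (rule member_le_sum) (auto intro!: mult_nonneg_nonneg M0 mp_nonneg)
  moreover have "0 < Mk P \<mu> (x,a) (y1,b1) * mp (Mk P \<mu>) (y1,b1) t1 (x'',b'')"
    using y1 b1 b'' unfolding occ_mp Mk_def by simp
  ultimately have "0 < occ P \<mu> x a (Suc t1) x'' b''"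
    unfolding occ_mp mp_back by linarith
  then have "0 < (\<Sum>y\<in>UNIV. \<Sum>b\<in>UNIV. occ P \<mu> x a t1 y b * P y b x'' * \<mu> x'' b'')" by simp
  then obtain y where "0 < (\<Sum>b\<in>UNIV. occ P \<mu> x a t1 y b * P y b x'' * \<mu> x'' b'')"
    using sum_pos_ex by blast
  then obtain b where pos: "0 < occ P \<mu> x a t1 y b * P y b x'' * \<mu> x'' b''"
    using sum_pos_ex by blast
  have o0: "0 \<le> occ P \<mu> x a t1 y b" by (rule occ_nonneg[OF K pm])
  have p0: "0 \<le> P y b x''" using K unfolding is_kernel_def by blast
  have "occ P \<mu> x a t1 y b \<noteq> 0" "P y b x'' \<noteq> 0" using pos by auto
  then show ?thesis using o0 p0 nd by (intro exI[of _ t1] exI[of _ y] exI[of _ b] exI[of _ x'']) auto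
qed

lemma Qfun_bellman:
  assumes K: "is_kernel P" and p: "is_policy \<nu>" and g0: "0 \<le> \<gamma>" and g1: "\<gamma> < 1"
  shows "Qfun P \<gamma> r \<nu> x a = r x a + \<gamma> * (\<Sum>z\<in>UNIV. P x a z * (\<Sum>c\<in>UNIV. \<nu> z c * Qfun P \<gamma> r \<nu> z c))"
proof -
  have M0: "\<And>u v. 0 \<le> Mk P \<nu> u v" using p K by (intro Mk_nonneg) (auto simp: is_policy_def)
  have M1: "\<And>u. (\<Sum>v\<in>UNIV. Mk P \<nu> u v) \<le> 1" using p K by (subst Mk_row) (auto simp: is_policy_def)
  have uQ: "unc (Qfun P \<gamma> r \<nu>) = Qp (Mk P \<nu>) (unc r) \<gamma>"
    by (auto simp: unc_def Qfun_Qp)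
  show ?thesis
    unfolding inner_eq unfolding uQ unfolding Qfun_Qp
    by (subst Qp_bellman[OF M0 M1 g0 g1]) (simp add: unc_def)
qed

lemma mp_wSuc: "(\<Sum>u\<in>UNIV. mp M s (Suc t) u) = (\<Sum>u\<in>UNIV. mp M s t u * (\<Sum>v\<in>UNIV. M u v))"
  by (simp add: sum_distrib_left, rule sum.swap)

lemma Mk_rowsum: "(\<Sum>q\<in>UNIV. Mk P \<nu> (y,b) q) = (\<Sum>y'\<in>UNIV. P y b y' * (\<Sum>b'\<in>UNIV. \<nu> y' b'))"
  unfolding Mk_def
  using sum2[of "\<lambda>y' b'. P y b y' * \<nu> y' b'", symmetric]
  by (simp add: sum_distrib_left)

lemma rate_compare:
  assumes K: "is_kernel P" and pp: "is_policy \<pi>" and pm: "is_policy \<mu>"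
    and g0: "0 \<le> \<gamma>" and g1: "\<gamma> < 1" and a0: "0 < \<alpha>" and a1: "\<alpha> < 1"
  shows "contraction_rate (alpha_retrace P \<gamma> r \<pi> \<mu> \<alpha>) \<le> contraction_rate (alpha_retrace P \<gamma> r \<pi> \<mu> 1)"
    and "0 < \<gamma> \<Longrightarrow> (\<forall>x a. distinguishable P \<pi> \<mu> x a) \<Longrightarrow>
         contraction_rate (alpha_retrace P \<gamma> r \<pi> \<mu> \<alpha>) < contraction_rate (alpha_retrace P \<gamma> r \<pi> \<mu> 1)"
proof -
  define \<pi>a where "\<pi>a = (\<lambda>x b. \<alpha> * \<pi> x b + (1 - \<alpha>) * \<mu> x b)"
  define \<pi>1 where "\<pi>1 = (\<lambda>x b. 1 * \<pi> x b + (1 - 1) * \<mu> x b)"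
  have \<pi>1_eq: "\<pi>1 = \<pi>" unfolding \<pi>1_def by simp
  have pa: "is_policy \<pi>a"
    using pp pm a0 a1 unfolding is_policy_def \<pi>a_def
    by (auto simp: sum.distrib sum_distrib_left[symmetric] intro!: add_nonneg_nonneg mult_nonneg_nonneg)
  have p1: "is_policy \<pi>1" using pp \<pi>1_eq by simp
  define Ba where "Ba = (\<lambda>y b. \<mu> y b * trace_c \<pi>a \<mu> y b)"
  define B1 where "B1 = (\<lambda>y b. \<mu> y b * trace_c \<pi>1 \<mu> y b)"
  have pa0: "\<And>y b. 0 \<le> \<pi>a y b" using pa unfolding is_policy_def by auto
  have pp0: "\<And>y b. 0 \<le> \<pi> y b" using pp unfolding is_policy_def by auto
  have pm0: "\<And>y b. 0 \<le> \<mu> y b" using pm unfolding is_policy_def by auto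
  have Ba_min: "Ba y b = min (\<mu> y b) (\<pi>a y b)" for y b
    unfolding Ba_def by (rule trace_min) (auto simp: pa0 pm0)
  have B1_min: "B1 y b = min (\<mu> y b) (\<pi> y b)" for y b
    unfolding B1_def \<pi>1_eq by (rule trace_min) (auto simp: pp0 pm0)
  define ka where "ka x a = kk (Mk P \<pi>a) (Mk P Ba) \<gamma> (x,a)" for x a
  define k1 where "k1 x a = kk (Mk P \<pi>1) (Mk P B1) \<gamma> (x,a)" for x a
  have ra: "contraction_rate (alpha_retrace P \<gamma> r \<pi> \<mu> \<alpha>) = supnorm ka"
    unfolding alpha_retrace_def \<pi>a_def[symmetric] retrace_main(1)[OF K pa pm g0 g1] ka_def Ba_def ..
  have r1: "contraction_rate (alpha_retrace P \<gamma> r \<pi> \<mu> 1) = supnorm k1"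
    unfolding alpha_retrace_def \<pi>1_def[symmetric] retrace_main(1)[OF K p1 pm g0 g1] k1_def B1_def ..
  note Ha = rt_hyps[OF K pa pm, folded Ba_def]
  note H1 = rt_hyps[OF K p1 pm, folded B1_def]
  have ka_f: "ka x a = 1 - (1 - \<gamma>) * wS (Mk P Ba) \<gamma> (x,a)" for x a
    unfolding ka_def by (rule kk_formula(1)[where A="Mk P \<pi>a" and B="Mk P Ba", OF Ha g0 g1])
  have k1_f: "k1 x a = 1 - (1 - \<gamma>) * wS (Mk P B1) \<gamma> (x,a)" for x a
    unfolding k1_def by (rule kk_formula(1)[where A="Mk P \<pi>1" and B="Mk P B1", OF H1 g0 g1])
  have ka0: "0 \<le> ka x a" for x a
    unfolding ka_def by (rule kk_nonneg[where A="Mk P \<pi>a" and B="Mk P Ba", OF Ha g0 g1])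
  have k10: "0 \<le> k1 x a" for x a
    unfolding k1_def by (rule kk_nonneg[where A="Mk P \<pi>1" and B="Mk P B1", OF H1 g0 g1])
  have Bmono: "B1 y b \<le> Ba y b" for y b
  proof -
    define m where "m = min (\<mu> y b) (\<pi> y b)"
    have m1: "\<alpha> * m \<le> \<alpha> * \<pi> y b" using a0 unfolding m_def by (intro mult_left_mono) auto
    have m2: "(1 - \<alpha>) * m \<le> (1 - \<alpha>) * \<mu> y b" using a1 unfolding m_def by (intro mult_left_mono) auto
    have m3: "m = \<alpha> * m + (1 - \<alpha>) * m" by (simp add: algebra_simps)
    have "m \<le> \<mu> y b" unfolding m_def by simp
    then show ?thesis unfolding Ba_min B1_min \<pi>a_def m_def[symmetric] using m1 m2 m3 by simp
  qed
  have Mmono: "\<And>u v. Mk P B1 u v \<le> Mk P Ba u v" by (rule Mk_mono[OF K Bmono])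
  have M1nn: "\<And>u v. 0 \<le> Mk P B1 u v" using H1 by blast
  have Manb: "\<And>u v. 0 \<le> Mk P Ba u v" using Ha by blast
  have rowa: "\<And>u. (\<Sum>v\<in>UNIV. Mk P Ba u v) \<le> 1" using Ha by (metis sum_mono)
  have row1: "\<And>u. (\<Sum>v\<in>UNIV. Mk P B1 u v) \<le> 1" using H1 by (metis sum_mono)
  have sumA: "summable (\<lambda>t. \<gamma> ^ t * (\<Sum>u\<in>UNIV. mp (Mk P Ba) s t u))" for s
    using W_summable[OF Manb rowa g0 g1, where s=s and g="\<lambda>_. 1"] by simp
  have sum1: "summable (\<lambda>t. \<gamma> ^ t * (\<Sum>u\<in>UNIV. mp (Mk P B1) s t u))" for s
    using W_summable[OF M1nn row1 g0 g1, where s=s and g="\<lambda>_. 1"] by simp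
  have wle: "wS (Mk P B1) \<gamma> s \<le> wS (Mk P Ba) \<gamma> s" for s
    unfolding wS_def
    by (rule suminf_le[OF _ sum1 sumA], rule mult_left_mono, rule sum_mono, rule mp_mono[OF M1nn Mmono])
      (simp add: g0)
  have kle: "ka x a \<le> k1 x a" for x a
    unfolding ka_f k1_f using wle[of "(x,a)"] g1 by (simp add: mult_left_mono)
  show "contraction_rate (alpha_retrace P \<gamma> r \<pi> \<mu> \<alpha>) \<le> contraction_rate (alpha_retrace P \<gamma> r \<pi> \<mu> 1)"
    unfolding ra r1
  proof (rule supnorm_le)
    fix x a show "\<bar>ka x a\<bar> \<le> supnorm k1"
      using ka0[of x a] kle[of x a] supnorm_ge[of k1 x a] by simp
  qed
  assume gp: "0 < \<gamma>" and D: "\<forall>x a. distinguishable P \<pi> \<mu> x a"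
  have strict: "wS (Mk P B1) \<gamma> (x,a) < wS (Mk P Ba) \<gamma> (x,a)" for x a
  proof -
    define s where "s = (x,a)"
    obtain t y b x' where o: "0 < occ P \<mu> x a t y b" and py: "0 < P y b x'" and nd: "\<pi> x' \<noteq> \<mu> x'"
      using path_exists[OF K pm D] by blast
    obtain b' where b': "\<pi> x' b' < \<mu> x' b'" using policy_diff_ex[OF pp pm nd] by blast
    have lowB: "(1 - \<alpha>) * \<mu> y b \<le> Ba y b" for y b
    proof -
      have "0 \<le> \<alpha> * \<pi> y b" "0 \<le> \<alpha> * \<mu> y b" using a0 pp0[of y b] pm0[of y b] by auto
      then show ?thesis unfolding Ba_min \<pi>a_def by (simp add: algebra_simps)
    qed
    have Ml0: "\<And>u v. 0 \<le> (1 - \<alpha>) * Mk P \<mu> u v"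
      using a1 pm0 K by (intro mult_nonneg_nonneg Mk_nonneg) auto
    have Mlow: "\<And>u v. (1 - \<alpha>) * Mk P \<mu> u v \<le> Mk P Ba u v"
    proof -
      fix u v
      have "P (fst u) (snd u) (fst v) * ((1 - \<alpha>) * \<mu> (fst v) (snd v)) \<le> P (fst u) (snd u) (fst v) * Ba (fst v) (snd v)"
        using lowB K unfolding is_kernel_def by (intro mult_left_mono) auto
      then show "(1 - \<alpha>) * Mk P \<mu> u v \<le> Mk P Ba u v" unfolding Mk_def by (simp add: mult_ac)
    qed
    have "(1 - \<alpha>) ^ t * mp (Mk P \<mu>) s t (y,b) \<le> mp (Mk P Ba) s t (y,b)"
      using mp_mono[of "\<lambda>u v. (1 - \<alpha>) * Mk P \<mu> u v", OF Ml0 Mlow] unfolding mp_scale by blast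
    moreover have "0 < (1 - \<alpha>) ^ t * mp (Mk P \<mu>) s t (y,b)"
      using o a1 unfolding occ_mp s_def by simp
    ultimately have Wpos: "0 < mp (Mk P Ba) s t (y,b)" by linarith
    have bstrict: "B1 x' b' < Ba x' b'"
    proof -
      have "(1 - \<alpha>) * \<pi> x' b' < (1 - \<alpha>) * \<mu> x' b'" using a1 b' by (intro mult_strict_left_mono) auto
      then have "\<pi> x' b' < \<alpha> * \<pi> x' b' + (1 - \<alpha>) * \<mu> x' b'" by (simp add: algebra_simps)
      then show ?thesis unfolding Ba_min B1_min \<pi>a_def using b' by simp
    qed
    have sb: "(\<Sum>c\<in>UNIV. B1 x' c) < (\<Sum>c\<in>UNIV. Ba x' c)"
      by (rule sum_strict_mono_ex1) (use Bmono bstrict in auto)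
    have mle: "(\<Sum>v\<in>UNIV. Mk P B1 u v) \<le> (\<Sum>v\<in>UNIV. Mk P Ba u v)" for u
      by (rule sum_mono) (rule Mmono)
    have mstrict: "(\<Sum>v\<in>UNIV. Mk P B1 (y,b) v) < (\<Sum>v\<in>UNIV. Mk P Ba (y,b) v)"
      unfolding Mk_rowsum
    proof (rule sum_strict_mono_ex1)
      show "\<forall>z\<in>UNIV. P y b z * (\<Sum>b'\<in>UNIV. B1 z b') \<le> P y b z * (\<Sum>b'\<in>UNIV. Ba z b')"
        using K Bmono unfolding is_kernel_def by (auto intro!: mult_left_mono sum_mono)
      show "\<exists>z\<in>UNIV. P y b z * (\<Sum>b'\<in>UNIV. B1 z b') < P y b z * (\<Sum>b'\<in>UNIV. Ba z b')"
        using py sb by (intro bexI[of _ x']) auto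
    qed simp
    have "(\<Sum>u\<in>UNIV. mp (Mk P B1) s (Suc t) u) = (\<Sum>u\<in>UNIV. mp (Mk P B1) s t u * (\<Sum>v\<in>UNIV. Mk P B1 u v))"
      by (rule mp_wSuc)
    also have "\<dots> \<le> (\<Sum>u\<in>UNIV. mp (Mk P Ba) s t u * (\<Sum>v\<in>UNIV. Mk P B1 u v))"
      by (rule sum_mono, rule mult_right_mono, rule mp_mono[OF M1nn Mmono]) (simp add: M1nn sum_nonneg)
    also have "\<dots> < (\<Sum>u\<in>UNIV. mp (Mk P Ba) s t u * (\<Sum>v\<in>UNIV. Mk P Ba u v))"
    proof (rule sum_strict_mono_ex1)
      show "\<forall>u\<in>UNIV. mp (Mk P Ba) s t u * (\<Sum>v\<in>UNIV. Mk P B1 u v) \<le> mp (Mk P Ba) s t u * (\<Sum>v\<in>UNIV. Mk P Ba u v)"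
        using mle by (auto intro!: mult_left_mono mp_nonneg Manb)
      show "\<exists>u\<in>UNIV. mp (Mk P Ba) s t u * (\<Sum>v\<in>UNIV. Mk P B1 u v) < mp (Mk P Ba) s t u * (\<Sum>v\<in>UNIV. Mk P Ba u v)"
        using Wpos mstrict by (intro bexI[of _ "(y,b)"]) auto
    qed simp
    also have "\<dots> = (\<Sum>u\<in>UNIV. mp (Mk P Ba) s (Suc t) u)" by (rule mp_wSuc[symmetric])
    finally have wst: "(\<Sum>u\<in>UNIV. mp (Mk P B1) s (Suc t) u) < (\<Sum>u\<in>UNIV. mp (Mk P Ba) s (Suc t) u)" .
    have "0 < (\<Sum>n. \<gamma> ^ n * (\<Sum>u\<in>UNIV. mp (Mk P Ba) s n u) - \<gamma> ^ n * (\<Sum>u\<in>UNIV. mp (Mk P B1) s n u))"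
    proof (rule suminf_pos2[where i="Suc t"])
      show "summable (\<lambda>n. \<gamma> ^ n * (\<Sum>u\<in>UNIV. mp (Mk P Ba) s n u) - \<gamma> ^ n * (\<Sum>u\<in>UNIV. mp (Mk P B1) s n u))"
        by (rule summable_diff[OF sumA sum1])
      show "0 \<le> \<gamma> ^ n * (\<Sum>u\<in>UNIV. mp (Mk P Ba) s n u) - \<gamma> ^ n * (\<Sum>u\<in>UNIV. mp (Mk P B1) s n u)" for n
      proof -
        have "(\<Sum>u\<in>UNIV. mp (Mk P B1) s n u) \<le> (\<Sum>u\<in>UNIV. mp (Mk P Ba) s n u)"
          by (rule sum_mono, rule mp_mono[OF M1nn Mmono])
        then have "\<gamma> ^ n * (\<Sum>u\<in>UNIV. mp (Mk P B1) s n u) \<le> \<gamma> ^ n * (\<Sum>u\<in>UNIV. mp (Mk P Ba) s n u)"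
          using g0 by (intro mult_left_mono) auto
        then show ?thesis by simp
      qed
      show "0 < \<gamma> ^ Suc t * (\<Sum>u\<in>UNIV. mp (Mk P Ba) s (Suc t) u) - \<gamma> ^ Suc t * (\<Sum>u\<in>UNIV. mp (Mk P B1) s (Suc t) u)"
        using wst gp by (simp add: right_diff_distrib[symmetric])
    qed
    then show ?thesis unfolding wS_def s_def[symmetric] suminf_diff[OF sumA sum1, symmetric] by simp
  qed
  have kless: "ka x a < k1 x a" for x a
    unfolding ka_f k1_f using strict[of x a] g1 by (simp add: mult_strict_left_mono)
  obtain x0 a0 where "supnorm ka = \<bar>ka x0 a0\<bar>" using supnorm_attained by blast
  then show "contraction_rate (alpha_retrace P \<gamma> r \<pi> \<mu> \<alpha>) < contraction_rate (alpha_retrace P \<gamma> r \<pi> \<mu> 1)"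
    unfolding ra r1 using ka0[of x0 a0] kless[of x0 a0] supnorm_ge[of k1 x0 a0] by simp
qed

lemma greedy_stable:
  fixes Q :: "'x::finite \<Rightarrow> 'a::finite \<Rightarrow> real"
  assumes U: "\<forall>x. \<exists>!a. a \<in> greedy Q x"
  shows "\<exists>g>0. \<forall>Q'. (\<forall>x a. \<bar>Q' x a - Q x a\<bar> < g) \<longrightarrow> (\<forall>x. greedy Q' x = {THE a. a \<in> greedy Q x})"
proof -
  define as where "as x = (THE a. a \<in> greedy Q x)" for x
  have as_in: "as x \<in> greedy Q x" for x unfolding as_def using U theI' by metis
  have gap: "Q x b < Q x (as x)" if "b \<noteq> as x" for x b
  proof -
    have "b \<notin> greedy Q x" using U as_in that by blast
    then obtain c where "\<not> Q x c \<le> Q x b" unfolding greedy_def by blast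
    moreover have "Q x c \<le> Q x (as x)" using as_in unfolding greedy_def by blast
    ultimately show ?thesis by linarith
  qed
  define G where "G = (\<lambda>p. Q (fst p) (as (fst p)) - Q (fst p) (snd p)) ` {p. snd p \<noteq> as (fst p)}"
  have fG: "finite (insert 1 G)" unfolding G_def by simp
  define g0 where "g0 = Min (insert 1 G)"
  have g0p: "0 < g0" unfolding g0_def using fG
    by (subst Min_gr_iff) (auto simp: G_def gap)
  have g0le: "g0 \<le> Q x (as x) - Q x b" if "b \<noteq> as x" for x b
  proof -
    have "Q x (as x) - Q x b \<in> insert 1 G" unfolding G_def using that
      by (intro insertI2 image_eqI[of _ _ "(x,b)"]) auto
    then show ?thesis unfolding g0_def using fG by (rule Min_le[rotated])
  qed
  show ?thesis
  proof (intro exI[of _ "g0 / 2"] conjI allI impI)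
    show "0 < g0 / 2" using g0p by simp
    fix Q' x assume cl: "\<forall>x a. \<bar>Q' x a - Q x a\<bar> < g0 / 2"
    have st: "Q' x b < Q' x (as x)" if "b \<noteq> as x" for b
      using g0le[OF that] cl[rule_format, of x b] cl[rule_format, of x "as x"] by linarith
    show "greedy Q' x = {THE a. a \<in> greedy Q x}"
      unfolding as_def[symmetric]
    proof (intro set_eqI iffI)
      fix b assume "b \<in> greedy Q' x"
      then have "\<forall>c. Q' x c \<le> Q' x b" unfolding greedy_def by blast
      then have "\<not> Q' x b < Q' x (as x)" by (simp add: not_less)
      then show "b \<in> {as x}" using st by blast
    next
      fix b assume "b \<in> {as x}"
      then have b: "b = as x" by simp
      have "Q' x c \<le> Q' x (as x)" for c using st[of c] by (cases "c = as x") auto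
      then show "b \<in> greedy Q' x" unfolding greedy_def b by blast
    qed
  qed
qed

lemma perturb:
  assumes K: "is_kernel P" and pp: "is_policy \<pi>" and pm: "is_policy \<mu>"
    and g0: "0 \<le> \<gamma>" and g1: "\<gamma> < 1" and a0: "0 \<le> \<alpha>" and a1: "\<alpha> \<le> 1"
  shows "(1 - \<gamma>) * supnorm (\<lambda>x a. Qfun P \<gamma> r (\<lambda>x b. \<alpha> * \<pi> x b + (1 - \<alpha>) * \<mu> x b) x a - Qfun P \<gamma> r \<pi> x a)
     \<le> 2 * (1 - \<alpha>) * supnorm (Qfun P \<gamma> r \<pi>)"
proof -
  define \<pi>a where "\<pi>a = (\<lambda>x b. \<alpha> * \<pi> x b + (1 - \<alpha>) * \<mu> x b)"
  have pa: "is_policy \<pi>a"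
    using pp pm a0 a1 unfolding is_policy_def \<pi>a_def
    by (auto simp: sum.distrib sum_distrib_left[symmetric] intro!: add_nonneg_nonneg mult_nonneg_nonneg)
  define Qa where "Qa = Qfun P \<gamma> r \<pi>a"
  define Qp' where "Qp' = Qfun P \<gamma> r \<pi>"
  define D where "D x a = Qa x a - Qp' x a" for x a
  define sD where "sD = supnorm D"
  define M where "M = supnorm Qp'"
  have pa0: "\<And>y b. 0 \<le> \<pi>a y b" "\<And>y. (\<Sum>b\<in>UNIV. \<pi>a y b) = 1" using pa unfolding is_policy_def by auto
  have pp0: "\<And>y b. 0 \<le> \<pi> y b" "\<And>y. (\<Sum>b\<in>UNIV. \<pi> y b) = 1" using pp unfolding is_policy_def by auto
  have pm0: "\<And>y b. 0 \<le> \<mu> y b" "\<And>y. (\<Sum>b\<in>UNIV. \<mu> y b) = 1" using pm unfolding is_policy_def by auto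
  have K0: "\<And>x a y. 0 \<le> P x a y" "\<And>x a. (\<Sum>y\<in>UNIV. P x a y) = 1" using K unfolding is_kernel_def by auto
  have inner: "\<bar>(\<Sum>c\<in>UNIV. \<pi>a z c * Qa z c) - (\<Sum>c\<in>UNIV. \<pi> z c * Qp' z c)\<bar> \<le> sD + 2 * (1 - \<alpha>) * M" for z
  proof -
    have split: "(\<Sum>c\<in>UNIV. \<pi>a z c * Qa z c) - (\<Sum>c\<in>UNIV. \<pi> z c * Qp' z c)
        = (\<Sum>c\<in>UNIV. \<pi>a z c * D z c) + (\<Sum>c\<in>UNIV. (1 - \<alpha>) * (\<mu> z c - \<pi> z c) * Qp' z c)"
      unfolding D_def \<pi>a_def by (simp add: sum_subtractf[symmetric] sum.distrib[symmetric] algebra_simps)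
    have t1: "\<bar>\<Sum>c\<in>UNIV. \<pi>a z c * D z c\<bar> \<le> sD"
      using pa0 by (intro wsum_bound) (auto simp: sD_def supnorm_ge)
    have "\<bar>\<Sum>c\<in>UNIV. (1 - \<alpha>) * (\<mu> z c - \<pi> z c) * Qp' z c\<bar> \<le> (\<Sum>c\<in>UNIV. \<bar>(1 - \<alpha>) * (\<mu> z c - \<pi> z c) * Qp' z c\<bar>)"
      by (rule sum_abs)
    also have "\<dots> \<le> (\<Sum>c\<in>UNIV. (1 - \<alpha>) * (\<mu> z c + \<pi> z c) * M)"
    proof (rule sum_mono)
      fix c
      have "\<bar>\<mu> z c - \<pi> z c\<bar> \<le> \<mu> z c + \<pi> z c" using pm0(1)[of z c] pp0(1)[of z c] by linarith
      moreover have "\<bar>Qp' z c\<bar> \<le> M" unfolding M_def by (rule supnorm_ge)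
      ultimately have "\<bar>\<mu> z c - \<pi> z c\<bar> * \<bar>Qp' z c\<bar> \<le> (\<mu> z c + \<pi> z c) * M"
        by (intro mult_mono) (auto simp: add_nonneg_nonneg pm0 pp0)
      then have "(1 - \<alpha>) * (\<bar>\<mu> z c - \<pi> z c\<bar> * \<bar>Qp' z c\<bar>) \<le> (1 - \<alpha>) * ((\<mu> z c + \<pi> z c) * M)"
        using a1 by (intro mult_left_mono) auto
      then show "\<bar>(1 - \<alpha>) * (\<mu> z c - \<pi> z c) * Qp' z c\<bar> \<le> (1 - \<alpha>) * (\<mu> z c + \<pi> z c) * M"
        using a1 by (simp add: abs_mult mult_ac)
    qed
    also have "\<dots> = 2 * (1 - \<alpha>) * M"
      by (simp add: sum_distrib_right[symmetric] sum_distrib_left[symmetric] sum.distrib pm0 pp0)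
    finally show ?thesis unfolding split using t1 by linarith
  qed
  have "\<bar>D x a\<bar> \<le> \<gamma> * (sD + 2 * (1 - \<alpha>) * M)" for x a
  proof -
    have "D x a = \<gamma> * (\<Sum>z\<in>UNIV. P x a z * ((\<Sum>c\<in>UNIV. \<pi>a z c * Qa z c) - (\<Sum>c\<in>UNIV. \<pi> z c * Qp' z c)))"
      unfolding D_def Qa_def Qp'_def
      apply (subst Qfun_bellman[OF K pa g0 g1])
      apply (subst Qfun_bellman[OF K pp g0 g1])
      by (simp add: algebra_simps sum_subtractf)
    moreover have "\<bar>\<Sum>z\<in>UNIV. P x a z * ((\<Sum>c\<in>UNIV. \<pi>a z c * Qa z c) - (\<Sum>c\<in>UNIV. \<pi> z c * Qp' z c))\<bar>
        \<le> sD + 2 * (1 - \<alpha>) * M"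
      using K0 inner by (intro wsum_bound) auto
    ultimately show ?thesis using g0 by (simp add: abs_mult mult_left_mono)
  qed
  then have "sD \<le> \<gamma> * (sD + 2 * (1 - \<alpha>) * M)" unfolding sD_def by (intro supnorm_le) (simp add: sD_def)
  moreover have "\<gamma> * (2 * (1 - \<alpha>) * M) \<le> 2 * (1 - \<alpha>) * M"
    using g0 g1 a1 supnorm_nonneg[of Qp'] unfolding M_def by (intro mult_left_le_one_le) auto
  ultimately have "(1 - \<gamma>) * sD \<le> 2 * (1 - \<alpha>) * M" by (simp add: algebra_simps)
  then show ?thesis unfolding sD_def D_def Qa_def Qp'_def M_def \<pi>a_def .
qed

theorem proposition3p3:
  fixes P :: "'x::finite \<Rightarrow> 'a::finite \<Rightarrow> 'x \<Rightarrow> real"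
    and r :: "'x \<Rightarrow> 'a \<Rightarrow> real"
    and \<gamma> :: real
    and \<pi> \<mu> :: "'x \<Rightarrow> 'a \<Rightarrow> real"
  assumes "is_kernel P"
    and "0 \<le> \<gamma>" and "\<gamma> < 1"
    and "is_policy \<pi>" and "is_policy \<mu>"
    and "\<forall>x. \<exists>!a. a \<in> greedy (Qfun P \<gamma> r \<pi>) x"
  shows "\<exists>\<alpha>. 0 < \<alpha> \<and> \<alpha> < 1
    \<and> (\<forall>x. greedy (fixed_point (alpha_retrace P \<gamma> r \<pi> \<mu> \<alpha>)) x
             = {THE a. a \<in> greedy (Qfun P \<gamma> r \<pi>) x})
    \<and> contraction_rate (alpha_retrace P \<gamma> r \<pi> \<mu> \<alpha>)
        \<le> contraction_rate (alpha_retrace P \<gamma> r \<pi> \<mu> 1)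
    \<and> ((0 < \<gamma> \<and> (\<forall>x a. distinguishable P \<pi> \<mu> x a)) \<longrightarrow>
        contraction_rate (alpha_retrace P \<gamma> r \<pi> \<mu> \<alpha>)
          < contraction_rate (alpha_retrace P \<gamma> r \<pi> \<mu> 1))"
proof -
  note K = assms(1) and g0 = assms(2) and g1 = assms(3) and pp = assms(4) and pm = assms(5)
  obtain g where gp: "0 < g" and stab: "\<forall>Q'. (\<forall>x a. \<bar>Q' x a - Qfun P \<gamma> r \<pi> x a\<bar> < g) \<longrightarrow>
      (\<forall>x. greedy Q' x = {THE a. a \<in> greedy (Qfun P \<gamma> r \<pi>) x})"
    using greedy_stable[OF assms(6)] by blast
  define M where "M = supnorm (Qfun P \<gamma> r \<pi>)"
  have M0: "0 \<le> M" unfolding M_def by (rule supnorm_nonneg)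
  define c where "c = g * (1 - \<gamma>)"
  have cp: "0 < c" unfolding c_def using gp g1 by simp
  define \<delta> where "\<delta> = min (1/2) (c / (2 * (M + 1)))"
  have dp: "0 < \<delta>" unfolding \<delta>_def using cp M0 by simp
  have d2: "\<delta> \<le> 1/2" unfolding \<delta>_def by (rule min.cobounded1)
  have dc: "\<delta> \<le> c / (2 * (M + 1))" unfolding \<delta>_def by (rule min.cobounded2)
  define \<alpha> where "\<alpha> = 1 - \<delta>"
  have a0: "0 < \<alpha>" and a1: "\<alpha> < 1" unfolding \<alpha>_def using dp d2 by auto
  define \<pi>a where "\<pi>a = (\<lambda>x b. \<alpha> * \<pi> x b + (1 - \<alpha>) * \<mu> x b)"
  have pa: "is_policy \<pi>a"
    using pp pm a0 a1 unfolding is_policy_def \<pi>a_def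
    by (auto simp: sum.distrib sum_distrib_left[symmetric] intro!: add_nonneg_nonneg mult_nonneg_nonneg)
  have fp: "fixed_point (alpha_retrace P \<gamma> r \<pi> \<mu> \<alpha>) = Qfun P \<gamma> r \<pi>a"
    unfolding alpha_retrace_def \<pi>a_def[symmetric] by (rule retrace_main(2)[OF K pa pm g0 g1])
  have pert: "(1 - \<gamma>) * supnorm (\<lambda>x a. Qfun P \<gamma> r \<pi>a x a - Qfun P \<gamma> r \<pi> x a) \<le> 2 * \<delta> * M"
    using perturb[OF K pp pm g0 g1, of \<alpha>] a0 a1 unfolding \<pi>a_def M_def \<alpha>_def by simp
  have "2 * \<delta> * M \<le> 2 * (c / (2 * (M + 1))) * M"
    using dc M0 by (intro mult_right_mono) auto
  also have "\<dots> = c * M / (M + 1)" using M0 by (simp add: field_simps)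
  also have "\<dots> < c" using M0 cp by (simp add: divide_less_eq)
  finally have "(1 - \<gamma>) * supnorm (\<lambda>x a. Qfun P \<gamma> r \<pi>a x a - Qfun P \<gamma> r \<pi> x a) < (1 - \<gamma>) * g"
    using pert unfolding c_def by (simp add: mult.commute)
  then have sl: "supnorm (\<lambda>x a. Qfun P \<gamma> r \<pi>a x a - Qfun P \<gamma> r \<pi> x a) < g"
    using g1 by simp
  have close: "\<forall>x a. \<bar>Qfun P \<gamma> r \<pi>a x a - Qfun P \<gamma> r \<pi> x a\<bar> < g"
    using sl supnorm_ge[of "\<lambda>x a. Qfun P \<gamma> r \<pi>a x a - Qfun P \<gamma> r \<pi> x a"] by (meson le_less_trans)
  have gr: "\<forall>x. greedy (fixed_point (alpha_retrace P \<gamma> r \<pi> \<mu> \<alpha>)) x = {THE a. a \<in> greedy (Qfun P \<gamma> r \<pi>) x}"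
    unfolding fp using stab close by blast
  show ?thesis
    using a0 a1 gr rate_compare[OF K pp pm g0 g1 a0 a1] by blast
qed

end
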